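(* Let $s,t$ be real numbers with $t\ge s>0$. For every positive integer $n$, $M_n \geq t\, M_{n-1}$.
   Context: For a real number $s$, a positive integer $n$ and a set $P \subseteq \mathbb{R}$, $\mathcal{G}_s^{n\times n}(P)$ denotes the set of all $n\times n$ real upper Hessenberg matrices $A=(a_{ij})$ with $a_{i+1,i} = s$ for $1\le i\le n-1$, $a_{ij}=0$ for $i > j+1$, and $a_{ij}\in P$ for all $i \le j$. For $n\ge 1$, $M_n$ is the maximum of $|\det A|$ over $A\in\mathcal{G}_s^{n\times n}([0,t])$, and $M_0 := 1$. *)

theory Defs
  imports "Jordan_Normal_Form.Determinant"
begin

definition hess_set :: "real \<Rightarrow> nat \<Rightarrow> real set \<Rightarrow> real mat set" where
  "hess_set s n P = {A \<in> carrier_mat n n.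
      \<forall>i<n. \<forall>j<n. (i = j + 1 \<longrightarrow> A $$ (i, j) = s)
                 \<and> (i > j + 1 \<longrightarrow> A $$ (i, j) = 0)
                 \<and> (i \<le> j \<longrightarrow> A $$ (i, j) \<in> P)}"

definition Mmax :: "real \<Rightarrow> real \<Rightarrow> nat \<Rightarrow> real" where
  "Mmax s t n = (if n = 0 then 1
     else (GREATEST m. m \<in> (\<lambda>A. \<bar>det A\<bar>) ` hess_set s n {0..t}))"

end

theory Submission
  imports Defs
begin

definition upd :: "real mat \<Rightarrow> nat \<Rightarrow> nat \<Rightarrow> real \<Rightarrow> real mat" where
 "upd A i j x = mat (dim_row A) (dim_col A) (\<lambda>(k,l). if k = i \<and> l = j then x else A $$ (k,l))"

lemma upd_carrier[simp]: "A \<in> carrier_mat n n \<Longrightarrow> upd A i j x \<in> carrier_mat n n"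
  unfolding upd_def by auto

lemma upd_idx[simp]: "A \<in> carrier_mat n n \<Longrightarrow> k < n \<Longrightarrow> l < n \<Longrightarrow>
  upd A i j x $$ (k,l) = (if k = i \<and> l = j then x else A $$ (k,l))"
  unfolding upd_def by auto

lemma cofactor_col:
  assumes "A \<in> carrier_mat n n" "B \<in> carrier_mat n n"
    "\<And>k l. k < n \<Longrightarrow> l < n \<Longrightarrow> l \<noteq> j \<Longrightarrow> A $$ (k,l) = B $$ (k,l)"
  shows "cofactor A k j = cofactor B k j"
proof -
  have "mat_delete A k j = mat_delete B k j"
    unfolding mat_delete_def
    by (rule eq_matI) (use assms in auto)
  thus ?thesis unfolding cofactor_def by simp
qed

lemma det_upd:
  assumes A: "A \<in> carrier_mat n n" and i: "i < n" and j: "j < n"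
  shows "det (upd A i j x) = det (upd A i j 0) + x * cofactor A i j"
proof -
  have gen: "det (upd A i j y) = y * cofactor A i j + (\<Sum>k\<in>{..<n}-{i}. A $$ (k,j) * cofactor A k j)" for y
  proof -
    have "det (upd A i j y) = (\<Sum>k<n. upd A i j y $$ (k,j) * cofactor (upd A i j y) k j)"
      by (rule laplace_expansion_column[OF upd_carrier[OF A] j])
    also have "\<dots> = (\<Sum>k<n. (if k = i then y else A $$ (k,j)) * cofactor A k j)"
    proof (rule sum.cong)
      fix k assume k: "k \<in> {..<n}"
      have "cofactor (upd A i j y) k j = cofactor A k j"
        by (rule cofactor_col[OF upd_carrier[OF A] A]) (use A in simp)
      thus "upd A i j y $$ (k,j) * cofactor (upd A i j y) k j = (if k = i then y else A $$ (k,j)) * cofactor A k j"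
        using A j k by simp
    qed simp
    also have "\<dots> = y * cofactor A i j + (\<Sum>k\<in>{..<n}-{i}. (if k = i then y else A $$ (k,j)) * cofactor A k j)"
      by (subst sum.remove[of _ i]) (use i in auto)
    also have "(\<Sum>k\<in>{..<n}-{i}. (if k = i then y else A $$ (k,j)) * cofactor A k j) = (\<Sum>k\<in>{..<n}-{i}. A $$ (k,j) * cofactor A k j)"
      by (rule sum.cong) auto
    finally show ?thesis .
  qed
  show ?thesis using gen[of x] gen[of 0] by simp
qed


definition bad :: "real \<Rightarrow> nat \<Rightarrow> real mat \<Rightarrow> (nat \<times> nat) set" where
  "bad t n A = {(i,j). i < n \<and> j < n \<and> i \<le> j \<and> A $$ (i,j) \<notin> {0,t}}"

lemma bad_finite: "finite (bad t n A)"
proof -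
  have "bad t n A \<subseteq> {..<n} \<times> {..<n}" unfolding bad_def by auto
  thus ?thesis by (rule finite_subset) auto
qed

lemma upd_self: "A \<in> carrier_mat n n \<Longrightarrow> upd A i j (A $$ (i,j)) = A"
  by (rule eq_matI) (auto simp: upd_def)

lemma upd_hess:
  assumes "A \<in> hess_set s n {0..t}" "i \<le> j" "x \<in> {0..t}"
  shows "upd A i j x \<in> hess_set s n {0..t}"
  using assms unfolding hess_set_def by auto

lemma upd_bad:
  assumes "A \<in> carrier_mat n n" "x \<in> {0,t}"
  shows "bad t n (upd A i j x) = bad t n A - {(i,j)}"
proof (rule Set.set_eqI)
  fix p :: "nat \<times> nat"
  obtain a b where p: "p = (a,b)" by (cases p)
  show "p \<in> bad t n (upd A i j x) \<longleftrightarrow> p \<in> bad t n A - {(i,j)}"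
    unfolding p using assms by (cases "a = i \<and> b = j") (auto simp: bad_def)
qed

lemma abs_affine:
  fixes d c x t :: real
  assumes "0 \<le> x" "x \<le> t"
  shows "\<bar>d + x * c\<bar> \<le> max \<bar>d\<bar> \<bar>d + t * c\<bar>"
proof (cases "c \<ge> 0")
  case True
  have "0 \<le> x * c" "x * c \<le> t * c" using True assms by (auto intro: mult_right_mono)
  thus ?thesis by linarith
next
  case False
  have "x * c \<le> 0" "t * c \<le> x * c" using False assms
    by (auto simp: mult_nonneg_nonpos intro: mult_right_mono_neg)
  thus ?thesis by linarith
qed

lemma reduce:
  assumes t: "t > 0"
  shows "A \<in> hess_set s n {0..t} \<Longrightarrow> \<exists>B\<in>hess_set s n {0,t}. \<bar>det A\<bar> \<le> \<bar>det B\<bar>"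
proof (induction "card (bad t n A)" arbitrary: A rule: less_induct)
  case less
  have Ac: "A \<in> carrier_mat n n" using less.prems unfolding hess_set_def by auto
  show ?case
  proof (cases "bad t n A = {}")
    case True
    have "A \<in> hess_set s n {0,t}"
      using less.prems True unfolding hess_set_def bad_def by fastforce
    thus ?thesis by blast
  next
    case False
    then obtain i j where ij: "(i,j) \<in> bad t n A" by auto
    hence i: "i < n" and j: "j < n" and ilej: "i \<le> j" unfolding bad_def by auto
    have x: "A $$ (i,j) \<in> {0..t}" using less.prems i j ilej unfolding hess_set_def by auto
    have lt: "card (bad t n (upd A i j y)) < card (bad t n A)" if "y \<in> {0,t}" for y
      unfolding upd_bad[OF Ac that] by (rule card_Diff1_less[OF bad_finite ij])
    have h0: "upd A i j 0 \<in> hess_set s n {0..t}" and ht: "upd A i j t \<in> hess_set s n {0..t}"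
      using upd_hess[OF less.prems ilej] t by auto
    obtain B0 where B0: "B0 \<in> hess_set s n {0,t}" "\<bar>det (upd A i j 0)\<bar> \<le> \<bar>det B0\<bar>"
      using less.hyps[OF lt h0] by auto
    obtain Bt where Bt: "Bt \<in> hess_set s n {0,t}" "\<bar>det (upd A i j t)\<bar> \<le> \<bar>det Bt\<bar>"
      using less.hyps[OF lt ht] by auto
    have "det A = det (upd A i j (A $$ (i,j)))"
      by (subst upd_self[OF Ac]) (rule refl)
    also have "\<dots> = det (upd A i j 0) + A $$ (i,j) * cofactor A i j"
      by (rule det_upd[OF Ac i j])
    finally have e1: "det A = det (upd A i j 0) + A $$ (i,j) * cofactor A i j" .
    have e2: "det (upd A i j t) = det (upd A i j 0) + t * cofactor A i j"
      by (rule det_upd[OF Ac i j])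
    have x0: "0 \<le> A $$ (i,j)" and xt: "A $$ (i,j) \<le> t" using x by auto
    have aff: "\<bar>det (upd A i j 0) + A $$ (i,j) * cofactor A i j\<bar> \<le>
       max \<bar>det (upd A i j 0)\<bar> \<bar>det (upd A i j 0) + t * cofactor A i j\<bar>"
      by (rule abs_affine[OF x0 xt])
    have "\<bar>det A\<bar> \<le> max \<bar>det (upd A i j 0)\<bar> \<bar>det (upd A i j t)\<bar>"
      unfolding e1 e2 by (rule aff)
    hence "\<bar>det A\<bar> \<le> \<bar>det B0\<bar> \<or> \<bar>det A\<bar> \<le> \<bar>det Bt\<bar>"
      using B0(2) Bt(2) by linarith
    thus ?thesis using B0(1) Bt(1) by blast
  qed
qed

lemma hess_finite: "finite (hess_set s n {0,t})"
proof -
  have "hess_set s n {0,t} \<subseteq> (\<lambda>f. mat n n f) ` ({..<n} \<times> {..<n} \<rightarrow>\<^sub>E {0,s,t})"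
  proof
    fix A assume A: "A \<in> hess_set s n {0,t}"
    hence Ac: "A \<in> carrier_mat n n" unfolding hess_set_def by auto
    have "A = mat n n (restrict (\<lambda>p. A $$ p) ({..<n} \<times> {..<n}))"
      by (rule eq_matI) (use Ac in auto)
    moreover have "restrict (\<lambda>p. A $$ p) ({..<n} \<times> {..<n}) \<in> {..<n} \<times> {..<n} \<rightarrow>\<^sub>E {0,s,t}"
    proof -
      have H: "(i = j + 1 \<longrightarrow> A $$ (i, j) = s) \<and> (i > j + 1 \<longrightarrow> A $$ (i, j) = 0)
                 \<and> (i \<le> j \<longrightarrow> A $$ (i, j) \<in> {0,t})" if "i < n" "j < n" for i j
        using A that unfolding hess_set_def by blast
      have "A $$ (i,j) \<in> {0,s,t}" if "i < n" "j < n" for i j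
        using H[OF that] by (cases "i \<le> j"; cases "i = j + 1") auto
      thus ?thesis by auto
    qed
    ultimately show "A \<in> (\<lambda>f. mat n n f) ` ({..<n} \<times> {..<n} \<rightarrow>\<^sub>E {0,s,t})" by blast
  qed
  thus ?thesis by (rule finite_subset) (auto intro: finite_PiE)
qed

lemma hess_nonempty: "mat n n (\<lambda>(i,j). if i = j + 1 then s else 0) \<in> hess_set s n {0,t}"
  unfolding hess_set_def by auto

lemma mmax_prop:
  assumes t: "t > 0" and n: "n \<ge> 1"
  shows "Mmax s t n \<in> (\<lambda>A. \<bar>det A\<bar>) ` hess_set s n {0..t}"
    "\<And>A. A \<in> hess_set s n {0..t} \<Longrightarrow> \<bar>det A\<bar> \<le> Mmax s t n"
proof -
  let ?V = "(\<lambda>A. \<bar>det A\<bar>) ` hess_set s n {0,t}"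
  let ?S = "(\<lambda>A. \<bar>det A\<bar>) ` hess_set s n {0..t}"
  have sub: "hess_set s n {0,t} \<subseteq> hess_set s n {0..t}"
  proof -
    have "{0,t} \<subseteq> {0..t}" using t by auto
    thus ?thesis unfolding hess_set_def by blast
  qed
  have fin: "finite ?V" using hess_finite by auto
  have ne: "?V \<noteq> {}" using hess_nonempty by blast
  have mem: "Max ?V \<in> ?S" using Max_in[OF fin ne] sub by blast
  have ub: "y \<le> Max ?V" if yS: "y \<in> ?S" for y
  proof -
    obtain A where A: "A \<in> hess_set s n {0..t}" "y = \<bar>det A\<bar>" using yS by auto
    obtain B where B: "B \<in> hess_set s n {0,t}" "\<bar>det A\<bar> \<le> \<bar>det B\<bar>" using reduce[OF t A(1)] by auto
    have "\<bar>det B\<bar> \<le> Max ?V" using B(1) fin by auto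
    thus ?thesis using A B by linarith
  qed
  have eq: "Mmax s t n = Max ?V"
    unfolding Mmax_def using n by (auto intro!: Greatest_equality mem ub)
  show "Mmax s t n \<in> ?S" using eq mem by simp
  show "\<bar>det A\<bar> \<le> Mmax s t n" if "A \<in> hess_set s n {0..t}" for A
    using ub[of "\<bar>det A\<bar>"] that eq by auto
qed

definition ext :: "real \<Rightarrow> real \<Rightarrow> nat \<Rightarrow> real mat \<Rightarrow> real mat" where
  "ext s t m A = mat (Suc m) (Suc m) (\<lambda>(k,l). if k < m \<and> l < m then A $$ (k,l)
     else if k = m \<and> l = m then t else if k = m \<and> l + 1 = m then s else 0)"

lemma ext_hess:
  assumes "A \<in> hess_set s m {0..t}" "t \<ge> 0"
  shows "ext s t m A \<in> hess_set s (Suc m) {0..t}"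
  using assms unfolding hess_set_def ext_def
  by (auto simp: less_Suc_eq)

lemma ext_det:
  assumes "A \<in> carrier_mat m m"
  shows "det (ext s t m A) = t * det A"
proof -
  have E: "ext s t m A \<in> carrier_mat (Suc m) (Suc m)" unfolding ext_def by auto
  have "det (ext s t m A) = (\<Sum>k<Suc m. ext s t m A $$ (k,m) * cofactor (ext s t m A) k m)"
    by (rule laplace_expansion_column[OF E]) auto
  also have "\<dots> = t * cofactor (ext s t m A) m m"
    by (simp add: ext_def)
  also have "mat_delete (ext s t m A) m m = A"
    by (rule eq_matI) (use assms in \<open>auto simp: mat_delete_def ext_def\<close>)
  hence "cofactor (ext s t m A) m m = det A"
    unfolding cofactor_def by simp
  finally show ?thesis .
qed

theorem lemma3p1:
  fixes s t :: real and n :: nat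
  assumes "s > 0" and "t \<ge> s" and "n \<ge> 1"
  shows "Mmax s t n \<ge> t * Mmax s t (n - 1)"
proof -
  have t: "t > 0" using assms by linarith
  obtain m where m: "n = Suc m" using assms(3) by (cases n) auto
  have "\<exists>A\<in>hess_set s m {0..t}. \<bar>det A\<bar> = Mmax s t m"
  proof (cases "m = 0")
    case True
    have "(0\<^sub>m 0 0 :: real mat) \<in> hess_set s m {0..t}" using True unfolding hess_set_def by auto
    moreover have "det (0\<^sub>m 0 0 :: real mat) = 1" by (simp add: det_def)
    ultimately show ?thesis using True unfolding Mmax_def by force
  next
    case False
    show ?thesis using mmax_prop(1)[OF t, of m s] False by force
  qed
  then obtain A where A: "A \<in> hess_set s m {0..t}" "\<bar>det A\<bar> = Mmax s t m" by blast
  have Ac: "A \<in> carrier_mat m m" using A(1) unfolding hess_set_def by auto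
  have "\<bar>det (ext s t m A)\<bar> \<le> Mmax s t n"
    unfolding m by (rule mmax_prop(2)[OF t]) (use ext_hess[OF A(1)] t in auto)
  moreover have "\<bar>det (ext s t m A)\<bar> = t * Mmax s t m"
    using ext_det[OF Ac] A(2) t by (simp add: abs_mult)
  ultimately show ?thesis using m by simp
qed

end
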